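(* Let $\mathcal{X}$ and $\mathcal{Y}$ be infinite-dimensional Banach spaces with Schauder bases $\{x_n\}_{n\ge1}$ and $\{y_n\}_{n\ge1}$, and let $\mathcal{F}$ be a universal approximator. For every continuous (non-linear) operator $f:\mathcal{X}\to\mathcal{Y}$, every $\varepsilon>0$ and every compact $K\subseteq\mathcal{X}$ there exist $n,N,\tilde Q\in\mathbb{N}_+$, $\hat f\in\bigcup_c\mathcal{F}_{n,N,c}$ and real numbers $\tilde z_{j,i}$ ($j\le N$, $i\le\tilde Q$) such that $$\hat t(x)=\sum_{j=1}^N\sum_{i=1}^{\tilde Q}\Big[P_{\Delta_N}\circ\hat f\big((\beta^x_k)_{k=1}^n\big)\Big]_j\,\tilde z_{j,i}\,y_i$$ satisfies $\sup_{x\in K}\|f(x)-\hat t(x)\|_{\mathcal{Y}}<\varepsilon$, where $x=\sum_k\beta^x_kx_k$ is the Schauder expansion of $x$.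
   Context: $P_{\Delta_N}$ is the Euclidean orthogonal projection of $\mathbb{R}^N$ onto the simplex $\Delta_N$. A universal approximator is a family $\mathcal{F}=\{\mathcal{F}_{n,m,c}\}$ of sets of maps $\mathbb{R}^n\to\mathbb{R}^m$, nested in $c$, with a rate function $r(\omega,K,n,m,c)$ decreasing to $0$ in $c$, such that every uniformly continuous $f:\mathbb{R}^n\to\mathbb{R}^m$ with continuous modulus $\omega$ is approximated on every compact $K$ within $r(\omega,K,n,m,c)$ by some element of $\mathcal{F}_{n,m,c}$. *)

theory Defs
  imports "HOL-Analysis.Analysis"
begin

(* Schauder basis (indexed from 0: e 0 is the paper's x_1): every vector has a
   unique expansion v = sum_k beta_k e_k converging in norm. *)
definition schauder_basis :: "(nat \<Rightarrow> 'a::real_normed_vector) \<Rightarrow> bool" where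
  "schauder_basis e \<longleftrightarrow>
     (\<forall>v. \<exists>!\<beta>::nat \<Rightarrow> real. (\<lambda>n. \<Sum>k<n. \<beta> k *\<^sub>R e k) \<longlonglongrightarrow> v)"

definition schauder_coeff :: "(nat \<Rightarrow> 'a::real_normed_vector) \<Rightarrow> 'a \<Rightarrow> nat \<Rightarrow> real" where
  "schauder_coeff e v = (THE \<beta>. (\<lambda>n. \<Sum>k<n. \<beta> k *\<^sub>R e k) \<longlonglongrightarrow> v)"

definition infinite_dimensional :: "'a::real_vector itself \<Rightarrow> bool" where
  "infinite_dimensional _ \<longleftrightarrow> \<not> (\<exists>S::'a set. finite S \<and> span S = UNIV)"

(* R^n is represented as the functions nat => real vanishing from index n on
   (coordinate i < n is the paper's coordinate i+1). *)
definition vecs :: "nat \<Rightarrow> (nat \<Rightarrow> real) set" where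
  "vecs n = {x. \<forall>i\<ge>n. x i = 0}"

definition vnorm :: "nat \<Rightarrow> (nat \<Rightarrow> real) \<Rightarrow> real" where
  "vnorm n x = sqrt (\<Sum>i<n. (x i)\<^sup>2)"

definition prob_simplex :: "nat \<Rightarrow> (nat \<Rightarrow> real) set" where
  "prob_simplex N = {p \<in> vecs N. (\<forall>i<N. 0 \<le> p i) \<and> (\<Sum>i<N. p i) = 1}"

definition proj_simplex :: "nat \<Rightarrow> (nat \<Rightarrow> real) \<Rightarrow> (nat \<Rightarrow> real)" where
  "proj_simplex N v = (THE p. p \<in> prob_simplex N \<and>
      (\<forall>q\<in>prob_simplex N. vnorm N (\<lambda>i. v i - p i) \<le> vnorm N (\<lambda>i. v i - q i)))"

definition is_modulus :: "(real \<Rightarrow> real) \<Rightarrow> bool" where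
  "is_modulus \<omega> \<longleftrightarrow> continuous_on {0..} \<omega> \<and> \<omega> 0 = 0 \<and> mono_on {0..} \<omega> \<and>
     (\<forall>t\<ge>0. 0 \<le> \<omega> t)"

definition has_modulus :: "nat \<Rightarrow> nat \<Rightarrow> (real \<Rightarrow> real) \<Rightarrow> ((nat \<Rightarrow> real) \<Rightarrow> (nat \<Rightarrow> real)) \<Rightarrow> bool" where
  "has_modulus n m \<omega> f \<longleftrightarrow> f ` vecs n \<subseteq> vecs m \<and>
     (\<forall>x\<in>vecs n. \<forall>y\<in>vecs n. vnorm m (\<lambda>i. f x i - f y i) \<le> \<omega> (vnorm n (\<lambda>i. x i - y i)))"

definition universal_approximator ::
  "(nat \<Rightarrow> nat \<Rightarrow> nat \<Rightarrow> ((nat \<Rightarrow> real) \<Rightarrow> (nat \<Rightarrow> real)) set) \<Rightarrow>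
   ((real \<Rightarrow> real) \<Rightarrow> (nat \<Rightarrow> real) set \<Rightarrow> nat \<Rightarrow> nat \<Rightarrow> nat \<Rightarrow> real) \<Rightarrow> bool" where
  "universal_approximator F r \<longleftrightarrow>
     (\<forall>n m c. \<forall>g\<in>F n m c. g ` vecs n \<subseteq> vecs m) \<and>
     (\<forall>n m c c'. c \<le> c' \<longrightarrow> F n m c \<subseteq> F n m c') \<and>
     (\<forall>\<omega> K n m. antimono (\<lambda>c. r \<omega> K n m c) \<and> (\<lambda>c. r \<omega> K n m c) \<longlonglongrightarrow> 0) \<and>
     (\<forall>n m f \<omega> K c. is_modulus \<omega> \<and> has_modulus n m \<omega> f \<and> compact K \<and> K \<subseteq> vecs n \<longrightarrow>
        (\<exists>g\<in>F n m c. \<forall>x\<in>K. vnorm m (\<lambda>i. f x i - g x i) \<le> r \<omega> K n m c))"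

end

theory Submission
  imports Defs
begin

lemma tannery_banach:
  fixes a :: "nat \<Rightarrow> nat \<Rightarrow> 'a :: banach"
  assumes limit: "\<And>k. (\<lambda>n. a k n) \<longlonglongrightarrow> b k"
  assumes bound: "\<And>k n. norm (a k n) \<le> M k"
  assumes "summable M"
  shows "(\<lambda>n. suminf (\<lambda>k. a k n)) \<longlonglongrightarrow> suminf b"
proof -
  have bound': "norm (b k) \<le> M k" for k
    by (rule tendsto_upperbound[OF tendsto_norm[OF limit]]) (use bound in auto)
  have sb: "summable (\<lambda>n. norm (b n))"
    by (rule summable_comparison_test[OF _ \<open>summable M\<close>]) (use bound' in auto)
  show ?thesis
  proof (rule swap_uniform_limit')
    show "(\<lambda>K. (\<Sum>k<K. b k)) \<longlonglongrightarrow> (\<Sum>k. b k)"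
      using sb by (intro summable_LIMSEQ) (auto dest: summable_norm_cancel)
    show "\<forall>\<^sub>F K in sequentially. ((\<lambda>n. \<Sum>k<K. a k n) \<longlongrightarrow> (\<Sum>k<K. b k)) sequentially"
      by (intro tendsto_intros always_eventually allI limit)
    show "\<forall>\<^sub>F x in sequentially. x \<in> UNIV" by simp
    show "uniform_limit UNIV (\<lambda>K n. \<Sum>k<K. a k n) (\<lambda>n. \<Sum>k. a k n) sequentially"
      by (rule Weierstrass_m_test) (use bound \<open>summable M\<close> in auto)
  qed auto
qed

locale sbasis =
  fixes e :: "nat \<Rightarrow> 'a::banach"
  assumes sb: "schauder_basis e"
begin

abbreviation "co \<equiv> schauder_coeff e"
definition T :: "nat \<Rightarrow> 'a \<Rightarrow> 'a" where "T n x = (\<Sum>k<n. co x k *\<^sub>R e k)"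

lemma co_conv: "(\<lambda>n. T n x) \<longlonglongrightarrow> x"
proof -
  from sb have "\<exists>!\<beta>::nat \<Rightarrow> real. (\<lambda>n. \<Sum>k<n. \<beta> k *\<^sub>R e k) \<longlonglongrightarrow> x"
    unfolding schauder_basis_def by blast
  from theI'[OF this] show ?thesis unfolding T_def schauder_coeff_def .
qed

lemma co_unique:
  assumes "(\<lambda>n. \<Sum>k<n. b k *\<^sub>R e k) \<longlonglongrightarrow> x"
  shows "co x = b"
proof -
  from sb have "\<exists>!\<beta>::nat \<Rightarrow> real. (\<lambda>n. \<Sum>k<n. \<beta> k *\<^sub>R e k) \<longlonglongrightarrow> x"
    unfolding schauder_basis_def by blast
  then show ?thesis unfolding schauder_coeff_def
    using assms by (simp add: the1_equality)
qed

lemma co_add: "co (x + y) = (\<lambda>k. co x k + co y k)"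
proof (rule co_unique)
  have "(\<lambda>n. T n x + T n y) \<longlonglongrightarrow> x + y" by (intro tendsto_add co_conv)
  then show "(\<lambda>n. \<Sum>k<n. (co x k + co y k) *\<^sub>R e k) \<longlonglongrightarrow> x + y"
    by (simp add: T_def scaleR_add_left sum.distrib)
qed

lemma co_scale: "co (c *\<^sub>R x) = (\<lambda>k. c * co x k)"
proof (rule co_unique)
  have "(\<lambda>n. c *\<^sub>R T n x) \<longlonglongrightarrow> c *\<^sub>R x" by (intro tendsto_scaleR tendsto_const co_conv)
  then show "(\<lambda>n. \<Sum>k<n. (c * co x k) *\<^sub>R e k) \<longlonglongrightarrow> c *\<^sub>R x"
    by (simp add: T_def scaleR_sum_right)
qed

lemma co_minus: "co (- x) = (\<lambda>k. - co x k)"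
  using co_scale[of "-1" x] by simp

lemma co_diff: "co (x - y) = (\<lambda>k. co x k - co y k)"
  using co_add[of x "-y"] co_minus[of y] by simp

lemma T_add: "T n (x + y) = T n x + T n y"
  by (simp add: T_def co_add scaleR_add_left sum.distrib)
lemma T_scale: "T n (c *\<^sub>R x) = c *\<^sub>R T n x"
  by (simp add: T_def co_scale scaleR_sum_right)
lemma T_diff: "T n (x - y) = T n x - T n y"
  by (simp add: T_def co_diff scaleR_diff_left sum_subtractf)
lemma T_minus: "T n (- x) = - T n x"
  using T_scale[of n "-1" x] by simp

lemma T_Suc: "T (Suc k) x - T k x = co x k *\<^sub>R e k"
  by (simp add: T_def)

lemma e_nz: "e k \<noteq> 0"
proof
  assume ek: "e k = 0"
  have "co 0 = (\<lambda>j. 0)" by (rule co_unique) simp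
  moreover have "co 0 = (\<lambda>j. if j = k then 1 else 0)"
  proof (rule co_unique)
    have "(\<Sum>j<n. (if j = k then 1 else 0) *\<^sub>R e j) = 0" for n
      by (rule sum.neutral) (auto simp: ek)
    then show "(\<lambda>n. \<Sum>j<n. (if j = k then 1 else (0::real)) *\<^sub>R e j) \<longlonglongrightarrow> 0" by simp
  qed
  ultimately show False by (metis zero_neq_one)
qed


definition Fm :: "real \<Rightarrow> 'a set" where "Fm m = {x. \<forall>n. norm (T n x) \<le> m}"

lemma Fm_cover: "\<exists>m::nat. x \<in> Fm (real m)"
proof -
  have "convergent (\<lambda>n. T n x)" using co_conv unfolding convergent_def by blast
  then have "Bseq (\<lambda>n. T n x)" by (rule convergent_imp_Bseq)
  then obtain K where "K > 0" "\<And>n. norm (T n x) \<le> K" unfolding Bseq_def by blast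
  moreover have "K \<le> real (nat \<lceil>K\<rceil>)" by linarith
  ultimately have "\<forall>n. norm (T n x) \<le> real (nat \<lceil>K\<rceil>)" using order_trans by blast
  then show ?thesis unfolding Fm_def by blast
qed

lemma Fm_int: "\<exists>m::nat. interior (closure (Fm (real m))) \<noteq> {}"
proof (rule ccontr)
  assume H: "\<not> ?thesis"
  have "euclidean interior_of \<Union>(range (\<lambda>m::nat. closure (Fm (real m)))) = {}"
  proof (rule Baire_category_alt)
    show "completely_metrizable_space (euclidean::'a topology) \<or> locally_compact_space (euclidean::'a topology) \<and> regular_space (euclidean::'a topology)"
      using completely_metrizable_space_euclidean by blast
  qed (use H in auto)
  moreover have "\<Union>(range (\<lambda>m::nat. closure (Fm (real m)))) = UNIV"
    using Fm_cover closure_subset by blast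
  ultimately show False by simp
qed

lemma approx_ball: "\<exists>m>0. \<exists>r>0. \<forall>y \<delta>. norm y < r \<longrightarrow> \<delta> > 0 \<longrightarrow>
   (\<exists>a. (\<forall>n. norm (T n a) \<le> m) \<and> norm (y - a) < \<delta>)"
proof -
  obtain m :: nat where "interior (closure (Fm (real m))) \<noteq> {}" using Fm_int by blast
  then obtain x0 where "x0 \<in> interior (closure (Fm (real m)))" by blast
  then obtain r where r: "r > 0" "ball x0 r \<subseteq> closure (Fm (real m))"
    by (meson open_contains_ball open_interior interior_subset subset_trans)
  have main: "\<forall>y \<delta>. norm y < r \<longrightarrow> \<delta> > 0 \<longrightarrow>
   (\<exists>a. (\<forall>n. norm (T n a) \<le> real m + 1) \<and> norm (y - a) < \<delta>)"
  proof (intro allI impI)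
    fix y :: 'a and \<delta> :: real
    assume y: "norm y < r" and d: "\<delta> > 0"
    have "x0 + y \<in> closure (Fm (real m))" using r y by (auto simp: dist_norm)
    then obtain a1 where a1: "a1 \<in> Fm (real m)" "dist a1 (x0 + y) < \<delta>"
      using d closure_approachable by metis
    have "x0 - y \<in> closure (Fm (real m))" using r y by (auto simp: dist_norm)
    then obtain a2 where a2: "a2 \<in> Fm (real m)" "dist a2 (x0 - y) < \<delta>"
      using d closure_approachable by metis
    define a where "a = (1/2) *\<^sub>R (a1 - a2)"
    have "norm (T n a) \<le> real m + 1" for n
    proof -
      have "norm (T n a) = (1/2) * norm (T n a1 - T n a2)"
        by (simp add: a_def T_scale T_diff)
      also have "\<dots> \<le> (1/2) * (norm (T n a1) + norm (T n a2))"
        by (simp add: norm_triangle_ineq4)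
      also have "\<dots> \<le> real m"
      proof -
        have "norm (T n a1) \<le> real m" "norm (T n a2) \<le> real m" using a1 a2 unfolding Fm_def by auto
        then show ?thesis by (simp add: field_simps)
      qed
      finally show ?thesis by simp
    qed
    moreover have "norm (y - a) < \<delta>"
    proof -
      have "y - a = (1/2) *\<^sub>R ((x0 + y - a1) - (x0 - y - a2))"
        by (simp add: a_def algebra_simps flip: scaleR_add_left)
      then have "norm (y - a) = (1/2) * norm ((x0 + y - a1) - (x0 - y - a2))" by simp
      also have "\<dots> \<le> (1/2) * (norm (x0 + y - a1) + norm (x0 - y - a2))"
        by (intro mult_left_mono norm_triangle_ineq4) simp
      also have "\<dots> < \<delta>" using a1 a2 by (simp add: dist_norm norm_minus_commute)
      finally show ?thesis .
    qed
    ultimately show "\<exists>a. (\<forall>n. norm (T n a) \<le> real m + 1) \<and> norm (y - a) < \<delta>" by blast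
  qed
  show ?thesis
    apply (rule exI[of _ "real m + 1"])
    apply (rule conjI)
     apply simp
    apply (rule exI[of _ r])
    using r main by blast
qed

lemma series_bound:
  assumes as: "a sums y" and sM: "summable M" and bd: "\<And>j n. norm (T n (a j)) \<le> M j"
  shows "norm (T n y) \<le> suminf M"
proof -
  have cb: "\<bar>co (a j) k\<bar> \<le> 2 * M j / norm (e k)" for j k
  proof -
    have "\<bar>co (a j) k\<bar> * norm (e k) = norm (T (Suc k) (a j) - T k (a j))"
      by (simp add: T_Suc)
    also have "\<dots> \<le> norm (T (Suc k) (a j)) + norm (T k (a j))" by (rule norm_triangle_ineq4)
    also have "\<dots> \<le> 2 * M j" using bd[of "Suc k" j] bd[of k j] by linarith
    finally show ?thesis using e_nz[of k] by (simp add: field_simps)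
  qed
  have sk: "summable (\<lambda>j. co (a j) k)" for k
    by (rule summable_comparison_test[of _ "\<lambda>j. 2 * M j / norm (e k)"])
       (use cb in \<open>auto intro!: summable_divide summable_mult sM\<close>)
  define b where "b k = (\<Sum>j. co (a j) k)" for k
  have eq: "(\<Sum>k<n. b k *\<^sub>R e k) = (\<Sum>j. T n (a j))" for n
  proof -
    have "(\<Sum>k<n. b k *\<^sub>R e k) = (\<Sum>k<n. \<Sum>j. co (a j) k *\<^sub>R e k)"
      unfolding b_def by (intro sum.cong refl suminf_scaleR_left sk)
    also have "\<dots> = (\<Sum>j. \<Sum>k<n. co (a j) k *\<^sub>R e k)"
      by (rule suminf_sum[symmetric]) (intro summable_scaleR_left sk)
    finally show ?thesis by (simp add: T_def)
  qed
  have lim: "(\<lambda>n. \<Sum>j. T n (a j)) \<longlonglongrightarrow> (\<Sum>j. a j)"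
    by (rule tannery_banach[OF co_conv bd sM])
  have "(\<Sum>j. a j) = y" using as by (simp add: sums_iff)
  with lim eq have "(\<lambda>n. \<Sum>k<n. b k *\<^sub>R e k) \<longlonglongrightarrow> y" by simp
  then have "co y = b" by (rule co_unique)
  then have "T n y = (\<Sum>j. T n (a j))" using eq by (simp add: T_def)
  also have "norm \<dots> \<le> suminf M" by (rule norm_suminf_le[OF bd sM])
  finally show ?thesis .
qed

lemma basis_const: "\<exists>C>0. \<forall>n x. norm (T n x) \<le> C * norm x"
proof -
  obtain m r where m: "m > 0" and r: "r > 0" and P: "\<And>y \<delta>. norm y < r \<Longrightarrow> \<delta> > 0 \<Longrightarrow>
     (\<exists>a. (\<forall>n. norm (T n a) \<le> m) \<and> norm (y - a) < \<delta>)"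
    using approx_ball by blast
  have step: "\<exists>a. (\<forall>n. norm (T n a) \<le> m / 2^j) \<and> norm (u - a) < r / 2^(Suc j)"
    if "norm u < r / 2^j" for j u
  proof -
    have "norm ((2^j) *\<^sub>R u) < r" using that by (simp add: field_simps)
    then obtain a' where a': "\<forall>n. norm (T n a') \<le> m" "norm ((2^j) *\<^sub>R u - a') < r / 2"
      using P[of "(2^j) *\<^sub>R u" "r/2"] r by auto
    define a where "a = (1 / 2^j) *\<^sub>R a'"
    have "norm (T n a) \<le> m / 2^j" for n
      using a'(1)[rule_format, of n] by (simp add: a_def T_scale divide_right_mono)
    moreover have "norm (u - a) < r / 2^(Suc j)"
    proof -
      have "u - a = (1 / 2^j) *\<^sub>R ((2^j) *\<^sub>R u - a')" by (simp add: a_def algebra_simps)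
      then have "norm (u - a) = norm ((2^j) *\<^sub>R u - a') / 2^j" by simp
      also have "\<dots> < (r / 2) / 2^j" using a'(2) by (intro divide_strict_right_mono) auto
      finally show ?thesis by simp
    qed
    ultimately show ?thesis by blast
  qed
  define pick where "pick j u = (SOME a. (\<forall>n. norm (T n a) \<le> m / 2^j) \<and> norm (u - a) < r / 2^(Suc j))" for j u
  have pick: "(\<forall>n. norm (T n (pick j u)) \<le> m / 2^j) \<and> norm (u - pick j u) < r / 2^(Suc j)"
    if "norm u < r / 2^j" for j u
    unfolding pick_def by (rule someI_ex[OF step[OF that]])
  have ball_bound: "norm (T n y) \<le> 2 * m" if y: "norm y < r" for y n
  proof -
    define u where "u = rec_nat y (\<lambda>j v. v - pick j v)"
    have u0: "u 0 = y" and uS: "u (Suc j) = u j - pick j (u j)" for j by (simp_all add: u_def)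
    have nu: "norm (u j) < r / 2^j" for j
    proof (induction j)
      case 0 then show ?case using y by (simp add: u0)
    next
      case (Suc j) then show ?case using pick[of "u j" j] by (simp add: uS)
    qed
    define a where "a j = pick j (u j)" for j
    have bdA: "norm (T n (a j)) \<le> m * (1/2)^j" for j n
      using pick[OF nu[of j]] by (simp add: a_def power_one_over field_simps)
    have ps: "(\<Sum>i<J. a i) = y - u J" for J
      by (induction J) (simp_all add: u0 uS a_def)
    have "(\<lambda>J. r / 2^J) \<longlonglongrightarrow> 0"
      by (simp add: LIMSEQ_divide_realpow_zero)
    then have "(\<lambda>J. u J) \<longlonglongrightarrow> 0"
      by (rule Lim_null_comparison[rotated]) (use nu less_imp_le in \<open>auto intro: always_eventually\<close>)
    then have "(\<lambda>J. y - u J) \<longlonglongrightarrow> y - 0" by (intro tendsto_diff tendsto_const)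
    then have "a sums y" unfolding sums_def ps by simp
    moreover have sM: "summable (\<lambda>j. m * (1/2::real)^j)"
      by (intro summable_mult summable_geometric) simp
    ultimately have "norm (T n y) \<le> (\<Sum>j. m * (1/2::real)^j)"
      using bdA by (intro series_bound) auto
    also have "\<dots> = 2 * m"
    proof -
      have "(\<Sum>j. m * (1/2::real)^j) = m * (\<Sum>j. (1/2::real)^j)"
        by (rule suminf_mult) (simp add: summable_geometric)
      also have "(\<Sum>j. (1/2::real)^j) = 2" by (simp add: suminf_geometric)
      finally show ?thesis by simp
    qed
    finally show ?thesis .
  qed
  show ?thesis
  proof (intro exI[of _ "4 * m / r"] conjI allI)
    show "4 * m / r > 0" using m r by simp
    fix n x
    show "norm (T n x) \<le> 4 * m / r * norm x"
    proof (cases "x = 0")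
      case True then show ?thesis using T_scale[of n 0 0] by simp
    next
      case False
      define c where "c = r / (2 * norm x)"
      have c: "c > 0" using False r by (simp add: c_def)
      have "norm (c *\<^sub>R x) = r / 2" using False r by (simp add: c_def)
      then have "norm (T n (c *\<^sub>R x)) \<le> 2 * m" using r by (intro ball_bound) simp
      then have "c * norm (T n x) \<le> 2 * m" using c by (simp add: T_scale)
      then show ?thesis using c False r unfolding c_def by (simp add: field_simps)
    qed
  qed
qed

definition bc :: real where "bc = (SOME C. C > 0 \<and> (\<forall>n x. norm (T n x) \<le> C * norm x))"

lemma bc: "bc > 0" "norm (T n x) \<le> bc * norm x"
proof -
  have "bc > 0 \<and> (\<forall>n x. norm (T n x) \<le> bc * norm x)"
    unfolding bc_def using basis_const by (rule someI_ex)
  then show "bc > 0" "norm (T n x) \<le> bc * norm x" by auto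
qed

lemma co_bound: "\<bar>co x k\<bar> \<le> (2 * bc / norm (e k)) * norm x"
proof -
  have "\<bar>co x k\<bar> * norm (e k) = norm (T (Suc k) x - T k x)" by (simp add: T_Suc)
  also have "\<dots> \<le> norm (T (Suc k) x) + norm (T k x)" by (rule norm_triangle_ineq4)
  also have "\<dots> \<le> 2 * bc * norm x" using bc(2)[of "Suc k" x] bc(2)[of k x] by linarith
  finally show ?thesis using e_nz[of k] by (simp add: field_simps)
qed

lemma co_bounded_linear: "bounded_linear (\<lambda>x. co x k)"
proof (rule bounded_linear_intro[where K = "2 * bc / norm (e k)"])
  show "co (x + y) k = co x k + co y k" for x y by (simp add: co_add)
  show "co (r *\<^sub>R x) k = r *\<^sub>R co x k" for r x by (simp add: co_scale)
  show "norm (co x k) \<le> norm x * (2 * bc / norm (e k))" for x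
    using co_bound[of x k] by (simp add: mult.commute)
qed

lemma co_cont: "continuous_on S (\<lambda>x. co x k)"
  by (intro linear_continuous_on co_bounded_linear)

lemma T_lip: "norm (T n x - T n y) \<le> bc * norm (x - y)"
  using bc(2)[of n "x - y"] by (simp add: T_diff)

lemma unif_conv:
  assumes "compact K" "\<eta> > 0"
  shows "\<exists>N0. \<forall>n\<ge>N0. \<forall>x\<in>K. norm (x - T n x) \<le> \<eta>"
proof -
  define \<sigma> where "\<sigma> = \<eta> / (2 * (1 + bc))"
  have sp: "\<sigma> > 0" using assms bc(1) by (simp add: \<sigma>_def)
  obtain S where S: "finite S" "S \<subseteq> K" "K \<subseteq> (\<Union>x\<in>S. ball x \<sigma>)"
    using seq_compact_imp_totally_bounded[OF compact_imp_seq_compact[OF assms(1)]] sp by metis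
  have "\<forall>s\<in>S. eventually (\<lambda>n. dist (T n s) s < \<eta> / 2) sequentially"
  proof
    fix s assume "s \<in> S"
    show "eventually (\<lambda>n. dist (T n s) s < \<eta> / 2) sequentially"
      using co_conv[of s] assms(2) unfolding tendsto_iff by (meson half_gt_zero)
  qed
  then have "eventually (\<lambda>n. \<forall>s\<in>S. dist (T n s) s < \<eta> / 2) sequentially"
    by (rule eventually_ball_finite[OF S(1)])
  then obtain N0 where N0: "\<And>n s. n \<ge> N0 \<Longrightarrow> s \<in> S \<Longrightarrow> dist (T n s) s < \<eta> / 2"
    unfolding eventually_sequentially by blast
  show ?thesis
  proof (intro exI allI impI ballI)
    fix n x assume n: "n \<ge> N0" and x: "x \<in> K"
    then obtain s where s: "s \<in> S" "dist s x < \<sigma>" using S(3) by auto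
    have eqx: "x - T n x = (x - s) + (s - T n s) + (T n s - T n x)" by simp
    have tri1: "norm ((x - s) + (s - T n s) + (T n s - T n x)) \<le> norm ((x - s) + (s - T n s)) + norm (T n s - T n x)"
      by (rule norm_triangle_ineq)
    have tri2: "norm ((x - s) + (s - T n s)) \<le> norm (x - s) + norm (s - T n s)"
      by (rule norm_triangle_ineq)
    have "norm (x - T n x) \<le> norm (x - s) + norm (s - T n s) + norm (T n s - T n x)"
      unfolding eqx using tri1 tri2 by linarith
    also have "\<dots> \<le> \<sigma> + \<eta> / 2 + bc * \<sigma>"
    proof -
      have "norm (x - s) \<le> \<sigma>" using s by (simp add: dist_norm norm_minus_commute)
      moreover have "norm (s - T n s) \<le> \<eta> / 2" using N0[OF n s(1)] by (simp add: dist_norm norm_minus_commute)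
      moreover have "norm (T n s - T n x) \<le> bc * \<sigma>"
      proof -
        have "norm (s - x) \<le> \<sigma>" using s by (simp add: dist_norm)
        then have "bc * norm (s - x) \<le> bc * \<sigma>" using bc(1) by (simp add: mult_left_mono)
        then show ?thesis using T_lip[of n s x] by linarith
      qed
      ultimately show ?thesis by linarith
    qed
    also have "\<dots> = \<eta>"
    proof -
      have "\<sigma> * (1 + bc) = \<eta> / 2" unfolding \<sigma>_def using bc(1) by (simp add: field_simps)
      moreover have "\<sigma> + \<eta> / 2 + bc * \<sigma> = \<sigma> * (1 + bc) + \<eta> / 2" by (simp add: algebra_simps)
      ultimately show ?thesis by simp
    qed
    finally show "norm (x - T n x) \<le> \<eta>" .
  qed
qed

end

lemma vnorm_L2: "vnorm n x = L2_set x {..<n}"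
  by (simp add: vnorm_def L2_set_def)

lemma vnorm_nonneg: "vnorm n x \<ge> 0"
  by (simp add: vnorm_def sum_nonneg)

lemma vnorm_triangle: "vnorm n (\<lambda>i. x i + y i) \<le> vnorm n x + vnorm n y"
  unfolding vnorm_L2 by (rule L2_set_triangle_ineq)

lemma vnorm_comp: "i < n \<Longrightarrow> \<bar>x i\<bar> \<le> vnorm n x"
  unfolding vnorm_def
  by (rule real_le_rsqrt) (auto intro!: member_le_sum simp: power2_abs)

lemma vnorm_le_sum: "vnorm n x \<le> (\<Sum>i<n. \<bar>x i\<bar>)"
  unfolding vnorm_L2 by (rule L2_set_le_sum_abs)

lemma vnorm_sym: "vnorm n (\<lambda>i. x i - y i) = vnorm n (\<lambda>i. y i - x i)"
  unfolding vnorm_def by (simp add: power2_commute)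

lemma vnorm_tri3: "vnorm n (\<lambda>i. x i - z i) \<le> vnorm n (\<lambda>i. x i - y i) + vnorm n (\<lambda>i. y i - z i)"
  using vnorm_triangle[of n "\<lambda>i. x i - y i" "\<lambda>i. y i - z i"] by simp

lemma vnorm_eq0: "vnorm n x = 0 \<Longrightarrow> i < n \<Longrightarrow> x i = 0"
  using vnorm_comp[of i n x] vnorm_nonneg[of n x] by simp

lemma vnorm_cont: "continuous_on S (\<lambda>q::nat \<Rightarrow> real. vnorm N (\<lambda>i. v i - q i))"
proof -
  have c: "continuous_on S (\<lambda>q::nat \<Rightarrow> real. q i)" for i
    by (rule continuous_on_subset[OF continuous_on_product_coordinates]) simp
  show ?thesis unfolding vnorm_def
    by (intro continuous_intros c)
qed

lemma simplex_ne: "N \<ge> 1 \<Longrightarrow> (\<lambda>i. if i = 0 then 1 else 0) \<in> prob_simplex N"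
  by (auto simp: prob_simplex_def vecs_def)

lemma simplex_compact: "compact (prob_simplex N)"
proof -
  define S where "S i = (if i < N then {0..1::real} else {0})" for i
  have "compactin (product_topology (\<lambda>i. euclidean) UNIV) (PiE UNIV S)"
    by (subst compactin_PiE) (auto simp: S_def)
  then have c1: "compact (PiE UNIV S)"
    by (simp add: euclidean_product_topology compactin_euclidean_iff)
  have c: "continuous_on UNIV (\<lambda>q::nat \<Rightarrow> real. q i)" for i
    by (rule continuous_on_product_coordinates)
  have cl1: "closed {q::nat \<Rightarrow> real. (\<Sum>i<N. q i) = 1}"
    by (rule closed_Collect_eq) (intro continuous_intros c, rule continuous_on_const)
  have mem: "q \<in> PiE UNIV S \<longleftrightarrow> (\<forall>i. q i \<in> S i)" for q
    by (simp add: PiE_UNIV_domain Pi_iff)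
  have sub: "prob_simplex N = PiE UNIV S \<inter> {q. (\<Sum>i<N. q i) = 1}"
  proof (rule set_eqI, rule iffI)
    fix q assume q: "q \<in> prob_simplex N"
    then have q0: "\<forall>i\<ge>N. q i = 0" "\<forall>i<N. 0 \<le> q i" "(\<Sum>i<N. q i) = 1"
      unfolding prob_simplex_def vecs_def by auto
    have "q i \<in> S i" for i
    proof (cases "i < N")
      case True
      have "q i \<le> (\<Sum>j<N. q j)"
        using q0 True by (intro member_le_sum) auto
      then show ?thesis using q0 True by (simp add: S_def)
    next
      case False then show ?thesis using q0 by (simp add: S_def)
    qed
    then show "q \<in> PiE UNIV S \<inter> {q. (\<Sum>i<N. q i) = 1}"
      using q0 mem by blast
  next
    fix q assume q: "q \<in> PiE UNIV S \<inter> {q. (\<Sum>i<N. q i) = 1}"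
    then have qi: "q i \<in> S i" for i using mem by blast
    have "\<forall>i\<ge>N. q i = 0"
    proof (intro allI impI)
      fix i assume "i \<ge> N" then show "q i = 0" using qi[of i] by (simp add: S_def)
    qed
    moreover have "\<forall>i<N. 0 \<le> q i"
    proof (intro allI impI)
      fix i assume "i < N" then show "0 \<le> q i" using qi[of i] by (simp add: S_def)
    qed
    ultimately show "q \<in> prob_simplex N"
      using q unfolding prob_simplex_def vecs_def by blast
  qed
  show ?thesis unfolding sub using c1 cl1 by (rule compact_Int_closed)
qed



lemma simplex_mid:
  assumes "p \<in> prob_simplex N" "q \<in> prob_simplex N"
  shows "(\<lambda>i. (p i + q i) / 2) \<in> prob_simplex N"
proof -
  have "(\<Sum>i<N. (p i + q i) / 2) = ((\<Sum>i<N. p i) + (\<Sum>i<N. q i)) / 2"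
    by (simp add: sum_divide_distrib[symmetric] sum.distrib)
  then show ?thesis using assms by (auto simp: prob_simplex_def vecs_def)
qed

lemma proj_ex1:
  assumes N: "N \<ge> 1"
  shows "\<exists>!p. p \<in> prob_simplex N \<and> (\<forall>q\<in>prob_simplex N. vnorm N (\<lambda>i. v i - p i) \<le> vnorm N (\<lambda>i. v i - q i))"
proof (rule ex_ex1I)
  show "\<exists>p. p \<in> prob_simplex N \<and> (\<forall>q\<in>prob_simplex N. vnorm N (\<lambda>i. v i - p i) \<le> vnorm N (\<lambda>i. v i - q i))"
    using continuous_attains_inf[OF simplex_compact _ vnorm_cont] simplex_ne[OF N] by blast
next
  fix p p'
  assume p: "p \<in> prob_simplex N \<and> (\<forall>q\<in>prob_simplex N. vnorm N (\<lambda>i. v i - p i) \<le> vnorm N (\<lambda>i. v i - q i))"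
    and p': "p' \<in> prob_simplex N \<and> (\<forall>q\<in>prob_simplex N. vnorm N (\<lambda>i. v i - p' i) \<le> vnorm N (\<lambda>i. v i - q i))"
  define m where "m i = (p i + p' i) / 2" for i
  have m: "m \<in> prob_simplex N" unfolding m_def using p p' by (intro simplex_mid) auto
  define sq where "sq x = (\<Sum>i<N. (x i)^2)" for x :: "nat \<Rightarrow> real"
  have vs: "vnorm N x = sqrt (sq x)" for x by (simp add: vnorm_def sq_def)
  have "sqrt (sq (\<lambda>i. v i - p i)) \<le> sqrt (sq (\<lambda>i. v i - m i))"
    using p m unfolding vs by blast
  then have le1: "sq (\<lambda>i. v i - p i) \<le> sq (\<lambda>i. v i - m i)" by simp
  have "sqrt (sq (\<lambda>i. v i - p' i)) \<le> sqrt (sq (\<lambda>i. v i - m i))"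
    using p' m unfolding vs by blast
  then have le2: "sq (\<lambda>i. v i - p' i) \<le> sq (\<lambda>i. v i - m i)" by simp
  have id: "sq (\<lambda>i. v i - m i) = (sq (\<lambda>i. v i - p i) + sq (\<lambda>i. v i - p' i)) / 2 - sq (\<lambda>i. p i - p' i) / 4"
  proof -
    have "(\<Sum>i<N. (v i - m i)^2) = (\<Sum>i<N. ((v i - p i)^2 + (v i - p' i)^2) / 2 - (p i - p' i)^2 / 4)"
      by (rule sum.cong) (simp_all add: m_def power2_eq_square field_simps)
    also have "\<dots> = (\<Sum>i<N. ((v i - p i)^2 + (v i - p' i)^2)) / 2 - (\<Sum>i<N. (p i - p' i)^2) / 4"
      by (simp add: sum_subtractf sum_divide_distrib)
    finally show ?thesis unfolding sq_def by (simp add: sum.distrib)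
  qed
  have "sq (\<lambda>i. p i - p' i) \<le> 0" using le1 le2 unfolding id by (simp add: field_simps)
  moreover have "sq (\<lambda>i. p i - p' i) \<ge> 0" unfolding sq_def by (simp add: sum_nonneg)
  ultimately have "sq (\<lambda>i. p i - p' i) = 0" by simp
  then have "\<forall>i\<in>{..<N}. (p i - p' i)^2 = 0" unfolding sq_def
    by (subst sum_nonneg_eq_0_iff[symmetric]) auto
  then have "p i = p' i" if "i < N" for i using that by simp
  moreover have "p i = p' i" if "i \<ge> N" for i using that p p' by (auto simp: prob_simplex_def vecs_def)
  ultimately show "p = p'" by (meson ext not_le)
qed

lemma proj_prop:
  assumes N: "N \<ge> 1"
  shows "proj_simplex N v \<in> prob_simplex N"
    "\<And>q. q \<in> prob_simplex N \<Longrightarrow> vnorm N (\<lambda>i. v i - proj_simplex N v i) \<le> vnorm N (\<lambda>i. v i - q i)"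
  using theI'[OF proj_ex1[OF N, of v]] unfolding proj_simplex_def by auto

lemma proj_close:
  assumes N: "N \<ge> 1" and g: "g \<in> prob_simplex N"
  shows "vnorm N (\<lambda>i. proj_simplex N v i - g i) \<le> 2 * vnorm N (\<lambda>i. v i - g i)"
proof -
  have "vnorm N (\<lambda>i. proj_simplex N v i - g i) \<le> vnorm N (\<lambda>i. proj_simplex N v i - v i) + vnorm N (\<lambda>i. v i - g i)"
    by (rule vnorm_tri3)
  also have "vnorm N (\<lambda>i. proj_simplex N v i - v i) = vnorm N (\<lambda>i. v i - proj_simplex N v i)"
    by (rule vnorm_sym)
  also have "\<dots> \<le> vnorm N (\<lambda>i. v i - g i)" by (rule proj_prop(2)[OF N g])
  finally show ?thesis by simp
qed


lemma quot_lip: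
  fixes a a' D D' \<rho> t M :: real
  assumes "0 \<le> a'" "a' \<le> \<rho>" "D \<ge> \<rho>/2" "D' \<ge> \<rho>/2" "\<rho> > 0"
    "\<bar>a - a'\<bar> \<le> t" "\<bar>D - D'\<bar> \<le> M * t" "M \<ge> 0"
  shows "\<bar>a / D - a' / D'\<bar> \<le> (2 + 4 * M) / \<rho> * t"
proof -
  have Dp: "D > 0" "D' > 0" using assms by linarith+
  have eq: "a / D - a' / D' = (a - a') / D + a' * (D' - D) / (D * D')"
    using Dp by (simp add: field_simps)
  have t1: "\<bar>(a - a') / D\<bar> \<le> 2 * t / \<rho>"
  proof -
    have "\<bar>(a - a') / D\<bar> = \<bar>a - a'\<bar> / D" using Dp by simp
    also have "\<dots> \<le> t / D" using Dp assms by (simp add: divide_right_mono)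
    also have "\<dots> \<le> t / (\<rho>/2)" using assms Dp
      by (intro divide_left_mono) (auto intro: order_trans[OF abs_ge_zero])
    also have "\<dots> = 2 * t / \<rho>" by simp
    finally show ?thesis .
  qed
  have t2: "\<bar>a' * (D' - D) / (D * D')\<bar> \<le> 4 * M * t / \<rho>"
  proof -
    have Mt: "M * t \<ge> 0" using assms(7) by (meson abs_ge_zero order_trans)
    have "\<bar>a' * (D' - D) / (D * D')\<bar> = a' * \<bar>D - D'\<bar> / (D * D')"
      using Dp assms by (simp add: abs_mult abs_minus_commute)
    also have "\<dots> \<le> \<rho> * (M * t) / (D * D')"
      using Dp assms by (intro divide_right_mono mult_mono) auto
    also have "\<dots> \<le> \<rho> * (M * t) / ((\<rho>/2) * (\<rho>/2))"
      using Dp assms Mt by (intro divide_left_mono mult_mono mult_nonneg_nonneg) (auto intro: order_trans[OF abs_ge_zero])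
    also have "\<dots> = 4 * M * t / \<rho>" using assms by (simp add: field_simps power2_eq_square)
    finally show ?thesis .
  qed
  have "\<bar>a / D - a' / D'\<bar> \<le> 2 * t / \<rho> + 4 * M * t / \<rho>"
    unfolding eq by (rule order_trans[OF abs_triangle_ineq add_mono[OF t1 t2]])
  also have "\<dots> = (2 + 4 * M) / \<rho> * t" by (simp add: add_divide_distrib algebra_simps)
  finally show ?thesis .
qed


theorem mainTheorem14:
  fixes xb :: "nat \<Rightarrow> 'x::banach" and yb :: "nat \<Rightarrow> 'y::banach"
    and F :: "nat \<Rightarrow> nat \<Rightarrow> nat \<Rightarrow> ((nat \<Rightarrow> real) \<Rightarrow> (nat \<Rightarrow> real)) set"
    and r :: "(real \<Rightarrow> real) \<Rightarrow> (nat \<Rightarrow> real) set \<Rightarrow> nat \<Rightarrow> nat \<Rightarrow> nat \<Rightarrow> real"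
    and f :: "'x \<Rightarrow> 'y" and \<epsilon> :: real and K :: "'x set"
  assumes "infinite_dimensional TYPE('x)" and "infinite_dimensional TYPE('y)"
    and "schauder_basis xb" and "schauder_basis yb"
    and "universal_approximator F r"
    and "continuous_on UNIV f" and "\<epsilon> > 0" and "compact K"
  shows "\<exists>n N Q. n \<ge> 1 \<and> N \<ge> 1 \<and> Q \<ge> 1 \<and>
     (\<exists>fh \<in> (\<Union>c. F n N c). \<exists>z :: nat \<Rightarrow> nat \<Rightarrow> real.
       (\<exists>\<delta> < \<epsilon>. \<forall>x\<in>K.
          norm (f x - (\<Sum>j<N. \<Sum>i<Q.
             (proj_simplex N (fh (\<lambda>k. if k < n then schauder_coeff xb x k else 0)) j
               * z j i) *\<^sub>R yb i)) \<le> \<delta>))"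
proof -
  interpret X: sbasis xb by unfold_locales (rule assms(3))
  interpret Y: sbasis yb by unfold_locales (rule assms(4))
  have UAapprox: "\<And>n m f \<omega> K c. is_modulus \<omega> \<Longrightarrow> has_modulus n m \<omega> f \<Longrightarrow> compact K \<Longrightarrow> K \<subseteq> vecs n \<Longrightarrow>
     \<exists>g\<in>F n m c. \<forall>x\<in>K. vnorm m (\<lambda>i. f x i - g x i) \<le> r \<omega> K n m c"
    using assms(5) unfolding universal_approximator_def by blast
  have rlim: "\<And>\<omega> K n m. (\<lambda>c. r \<omega> K n m c) \<longlonglongrightarrow> 0"
    using assms(5) unfolding universal_approximator_def by blast
  have eps: "\<epsilon> > 0" by fact
  show ?thesis
  proof (cases "K = {}")
    case True
    have "is_modulus (\<lambda>_. 0)" by (simp add: is_modulus_def mono_on_def)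
    moreover have "has_modulus 1 1 (\<lambda>_. 0) (\<lambda>_. \<lambda>_. 0)"
      by (auto simp: has_modulus_def vecs_def vnorm_def)
    ultimately obtain g where g: "g \<in> F 1 1 0"
      using UAapprox[of "\<lambda>_. 0" 1 1 "\<lambda>_. \<lambda>_. 0" "{}" 0] by auto
    show ?thesis
      apply (rule exI[of _ 1], rule exI[of _ 1], rule exI[of _ 1])
      using g eps True by auto
  next
    case False
    have ucK: "uniformly_continuous_on K f"
      by (rule compact_uniformly_continuous[OF continuous_on_subset[OF assms(6)] assms(8)]) simp
    obtain df where df: "df > 0" and dfK: "\<And>x x'. x \<in> K \<Longrightarrow> x' \<in> K \<Longrightarrow> dist x' x < df \<Longrightarrow> dist (f x') (f x) < \<epsilon> / 4"
      using ucK eps unfolding uniformly_continuous_on_def by (metis divide_pos_pos zero_less_numeral)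
    obtain n0 where n0: "\<And>n x. n \<ge> n0 \<Longrightarrow> x \<in> K \<Longrightarrow> norm (x - X.T n x) \<le> df / 4"
      using X.unif_conv[OF assms(8), of "df / 4"] df by auto
    define n where "n = max n0 1"
    have n1: "n \<ge> 1" by (simp add: n_def)
    have hn: "\<And>x. x \<in> K \<Longrightarrow> norm (x - X.T n x) \<le> df / 4" using n0 by (simp add: n_def)
    define B where "B x = (\<lambda>k. if k < n then X.co x k else 0)" for x
    define Lp where "Lp = 1 + (\<Sum>k<n. norm (xb k))"
    have Lp: "Lp > 0" unfolding Lp_def by (smt (verit) norm_ge_zero sum_nonneg)
    have TB: "norm (X.T n x - X.T n x') \<le> Lp * vnorm n (\<lambda>k. B x k - B x' k)" for x x'
    proof -
      define V where "V = vnorm n (\<lambda>k. B x k - B x' k)"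
      have V0: "V \<ge> 0" unfolding V_def by (rule vnorm_nonneg)
      have eqT: "X.T n x - X.T n x' = (\<Sum>k<n. (X.co x k - X.co x' k) *\<^sub>R xb k)"
        by (simp add: X.T_def sum_subtractf scaleR_diff_left)
      have "norm (X.T n x - X.T n x') \<le> (\<Sum>k<n. norm ((X.co x k - X.co x' k) *\<^sub>R xb k))"
        unfolding eqT by (rule norm_sum)
      also have "\<dots> \<le> (\<Sum>k<n. V * norm (xb k))"
      proof (rule sum_mono)
        fix k assume k: "k \<in> {..<n}"
        have "\<bar>X.co x k - X.co x' k\<bar> \<le> V"
          using vnorm_comp[of k n "\<lambda>k. B x k - B x' k"] k by (simp add: V_def B_def)
        then show "norm ((X.co x k - X.co x' k) *\<^sub>R xb k) \<le> V * norm (xb k)"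
          by (simp add: mult_right_mono)
      qed
      also have "\<dots> = V * (\<Sum>k<n. norm (xb k))" by (simp add: sum_distrib_left)
      also have "\<dots> \<le> V * Lp" unfolding Lp_def using V0 by (intro mult_left_mono) auto
      finally show ?thesis by (simp add: V_def mult.commute)
    qed
    define CB where "CB = 1 + (\<Sum>k<n. 2 * X.bc / norm (xb k))"
    have "(\<Sum>k<n. 2 * X.bc / norm (xb k)) \<ge> 0"
      by (intro sum_nonneg divide_nonneg_nonneg) (use X.bc(1) in auto)
    then have CB: "CB > 0" unfolding CB_def by linarith
    have BT: "vnorm n (\<lambda>k. B x k - B x' k) \<le> CB * norm (x - x')" for x x'
    proof -
      have "vnorm n (\<lambda>k. B x k - B x' k) \<le> (\<Sum>k<n. \<bar>B x k - B x' k\<bar>)" by (rule vnorm_le_sum)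
      also have "\<dots> \<le> (\<Sum>k<n. (2 * X.bc / norm (xb k)) * norm (x - x'))"
      proof (rule sum_mono)
        fix k assume "k \<in> {..<n}"
        then have "\<bar>B x k - B x' k\<bar> = \<bar>X.co (x - x') k\<bar>" by (simp add: B_def X.co_diff)
        also have "\<dots> \<le> (2 * X.bc / norm (xb k)) * norm (x - x')" by (rule X.co_bound)
        finally show "\<bar>B x k - B x' k\<bar> \<le> (2 * X.bc / norm (xb k)) * norm (x - x')" .
      qed
      also have "\<dots> = (\<Sum>k<n. 2 * X.bc / norm (xb k)) * norm (x - x')" by (simp add: sum_distrib_right)
      also have "\<dots> \<le> CB * norm (x - x')" unfolding CB_def by (intro mult_right_mono) auto
      finally show ?thesis .
    qed
    define \<rho> where "\<rho> = df / (4 * Lp)"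
    have \<rho>: "\<rho> > 0" using df Lp by (simp add: \<rho>_def)
    define \<sigma> where "\<sigma> = \<rho> / (2 * CB)"
    have \<sigma>: "\<sigma> > 0" using \<rho> CB by (simp add: \<sigma>_def)
    obtain S where S: "finite S" "S \<subseteq> K" "K \<subseteq> (\<Union>x\<in>S. ball x \<sigma>)"
      using seq_compact_imp_totally_bounded[OF compact_imp_seq_compact[OF assms(8)]] \<sigma> by metis
    obtain cs where cs: "set cs = S" using finite_list[OF S(1)] by blast
    define N where "N = length cs"
    define c where "c j = cs ! j" for j
    have N1: "N \<ge> 1" using False S cs unfolding N_def by (cases cs) auto
    have cK: "\<And>j. j < N \<Longrightarrow> c j \<in> K" using S cs by (auto simp: c_def N_def)
    have cover: "\<And>x. x \<in> K \<Longrightarrow> \<exists>j<N. dist (c j) x < \<sigma>"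
    proof -
      fix x assume "x \<in> K"
      then obtain s where "s \<in> S" "dist s x < \<sigma>" using S(3) by auto
      then show "\<exists>j<N. dist (c j) x < \<sigma>" using cs by (auto simp: c_def N_def in_set_conv_nth)
    qed
    have "\<forall>j\<in>{..<N}. eventually (\<lambda>Q. norm (f (c j) - Y.T Q (f (c j))) \<le> \<epsilon> / 4) sequentially"
    proof
      fix j assume "j \<in> {..<N}"
      have "eventually (\<lambda>Q. dist (Y.T Q (f (c j))) (f (c j)) < \<epsilon> / 4) sequentially"
        using Y.co_conv[of "f (c j)"] eps unfolding tendsto_iff by (meson divide_pos_pos zero_less_numeral)
      then show "eventually (\<lambda>Q. norm (f (c j) - Y.T Q (f (c j))) \<le> \<epsilon> / 4) sequentially"
        by eventually_elim (simp add: dist_norm norm_minus_commute)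
    qed
    then have "eventually (\<lambda>Q. \<forall>j\<in>{..<N}. norm (f (c j) - Y.T Q (f (c j))) \<le> \<epsilon> / 4) sequentially"
      by (rule eventually_ball_finite[rotated]) simp
    then obtain Q0 where Q0: "\<And>Q j. Q \<ge> Q0 \<Longrightarrow> j < N \<Longrightarrow> norm (f (c j) - Y.T Q (f (c j))) \<le> \<epsilon> / 4"
      unfolding eventually_sequentially by blast
    define Q where "Q = max Q0 1"
    have Q1: "Q \<ge> 1" by (simp add: Q_def)
    define w where "w j = Y.T Q (f (c j))" for j
    define z where "z j i = Y.co (f (c j)) i" for j i
    have hw: "\<And>j. j < N \<Longrightarrow> norm (f (c j) - w j) \<le> \<epsilon> / 4" using Q0 by (simp add: Q_def w_def)
    define W where "W = 1 + (\<Sum>j<N. norm (w j))"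
    have "(\<Sum>j<N. norm (w j)) \<ge> 0" by (intro sum_nonneg) auto
    then have W: "W > 0" unfolding W_def by linarith
    (* partition of unity *)
    define \<phi> where "\<phi> j b = max 0 (\<rho> - vnorm n (\<lambda>k. b k - B (c j) k))" for j b
    define s where "s b = (\<Sum>j<N. \<phi> j b)" for b
    define g where "g b = (\<lambda>j. if j < N then \<phi> j b / max (\<rho>/2) (s b) else 0)" for b
    have \<phi>b: "0 \<le> \<phi> j b" "\<phi> j b \<le> \<rho>" for j b
      unfolding \<phi>_def using vnorm_nonneg[of n] \<rho> by auto
    have \<phi>lip: "\<bar>\<phi> j b - \<phi> j b'\<bar> \<le> vnorm n (\<lambda>k. b k - b' k)" for j b b'
    proof -
      have "vnorm n (\<lambda>k. b k - B (c j) k) \<le> vnorm n (\<lambda>k. b k - b' k) + vnorm n (\<lambda>k. b' k - B (c j) k)"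
        by (rule vnorm_tri3)
      moreover have "vnorm n (\<lambda>k. b' k - B (c j) k) \<le> vnorm n (\<lambda>k. b' k - b k) + vnorm n (\<lambda>k. b k - B (c j) k)"
        by (rule vnorm_tri3)
      moreover have "vnorm n (\<lambda>k. b' k - b k) = vnorm n (\<lambda>k. b k - b' k)" by (rule vnorm_sym)
      ultimately show ?thesis unfolding \<phi>_def by linarith
    qed
    have slip: "\<bar>s b - s b'\<bar> \<le> real N * vnorm n (\<lambda>k. b k - b' k)" for b b'
    proof -
      have "\<bar>s b - s b'\<bar> = \<bar>\<Sum>j<N. \<phi> j b - \<phi> j b'\<bar>" by (simp add: s_def sum_subtractf)
      also have "\<dots> \<le> (\<Sum>j<N. \<bar>\<phi> j b - \<phi> j b'\<bar>)" by (rule sum_abs)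
      also have "\<dots> \<le> (\<Sum>j<N. vnorm n (\<lambda>k. b k - b' k))" by (intro sum_mono \<phi>lip)
      finally show ?thesis by simp
    qed
    define L1 where "L1 = (2 + 4 * real N) / \<rho>"
    have L1: "L1 \<ge> 0" using \<rho> by (simp add: L1_def)
    have glip: "\<bar>g b j - g b' j\<bar> \<le> L1 * vnorm n (\<lambda>k. b k - b' k)" for b b' j
    proof (cases "j < N")
      case True
      have "\<bar>max (\<rho>/2) (s b) - max (\<rho>/2) (s b')\<bar> \<le> real N * vnorm n (\<lambda>k. b k - b' k)"
        using slip[of b b'] by linarith
      then have "\<bar>\<phi> j b / max (\<rho>/2) (s b) - \<phi> j b' / max (\<rho>/2) (s b')\<bar> \<le> L1 * vnorm n (\<lambda>k. b k - b' k)"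
        unfolding L1_def using \<phi>b \<rho> \<phi>lip
        by (intro quot_lip) auto
      then show ?thesis using True by (simp add: g_def)
    next
      case False then show ?thesis using L1 vnorm_nonneg[of n] by (simp add: g_def)
    qed
    define \<omega> where "\<omega> t = real N * L1 * t" for t
    have mod\<omega>: "is_modulus \<omega>"
      unfolding is_modulus_def \<omega>_def
      using L1 by (auto intro!: continuous_intros mono_onI mult_left_mono)
    have hmod: "has_modulus n N \<omega> g"
      unfolding has_modulus_def
    proof (intro conjI ballI)
      show "g ` vecs n \<subseteq> vecs N" by (auto simp: g_def vecs_def)
      fix x y assume "x \<in> vecs n" "y \<in> vecs n"
      have "vnorm N (\<lambda>i. g x i - g y i) \<le> (\<Sum>i<N. \<bar>g x i - g y i\<bar>)" by (rule vnorm_le_sum)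
      also have "\<dots> \<le> (\<Sum>i<N. L1 * vnorm n (\<lambda>k. x k - y k))" by (intro sum_mono glip)
      finally show "vnorm N (\<lambda>i. g x i - g y i) \<le> \<omega> (vnorm n (\<lambda>i. x i - y i))"
        by (simp add: \<omega>_def)
    qed
    define Lset where "Lset = B ` K"
    have contB: "continuous_on K B"
      unfolding B_def
    proof (intro continuous_on_coordinatewise_then_product)
      fix i show "continuous_on K (\<lambda>x. if i < n then X.co x i else 0)"
        by (cases "i < n") (simp_all add: X.co_cont)
    qed
    have Lc: "compact Lset" unfolding Lset_def by (rule compact_continuous_image[OF contB assms(8)])
    have Lv: "Lset \<subseteq> vecs n" by (auto simp: Lset_def B_def vecs_def)
    define \<tau> where "\<tau> = \<epsilon> / (8 * W)"
    have \<tau>: "\<tau> > 0" using eps W by (simp add: \<tau>_def)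
    have "eventually (\<lambda>cc. dist (r \<omega> Lset n N cc) 0 < \<tau>) sequentially"
      using rlim[of \<omega> Lset n N] \<tau> unfolding tendsto_iff by blast
    then obtain cc where cc: "r \<omega> Lset n N cc < \<tau>"
      unfolding eventually_sequentially by (metis dist_real_def diff_zero abs_less_iff le_refl)
    obtain fh where fh: "fh \<in> F n N cc" and fhL: "\<And>b. b \<in> Lset \<Longrightarrow> vnorm N (\<lambda>i. g b i - fh b i) \<le> r \<omega> Lset n N cc"
      using UAapprox[OF mod\<omega> hmod Lc Lv, of cc] by blast
    have key: "norm (f x - (\<Sum>j<N. \<Sum>i<Q.
             (proj_simplex N (fh (\<lambda>k. if k < n then schauder_coeff xb x k else 0)) j
               * z j i) *\<^sub>R yb i)) \<le> 3 * \<epsilon> / 4" if xK: "x \<in> K" for x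
    proof -
      define b where "b = B x"
      have bL: "b \<in> Lset" using xK by (simp add: b_def Lset_def)
      have bdef: "(\<lambda>k. if k < n then schauder_coeff xb x k else 0) = b" by (simp add: b_def B_def)
      define p where "p = proj_simplex N (fh b)"
      obtain j0 where j0: "j0 < N" "dist (c j0) x < \<sigma>" using cover[OF xK] by blast
      have "vnorm n (\<lambda>k. b k - B (c j0) k) \<le> CB * norm (x - c j0)" unfolding b_def by (rule BT)
      also have "\<dots> < CB * \<sigma>" using j0 CB by (simp add: dist_norm norm_minus_commute)
      also have "CB * \<sigma> = \<rho> / 2" using CB by (simp add: \<sigma>_def)
      finally have "\<phi> j0 b > \<rho> / 2" unfolding \<phi>_def by linarith
      moreover have "\<phi> j0 b \<le> s b" unfolding s_def
        by (rule member_le_sum) (use j0 \<phi>b in auto)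
      ultimately have sge: "s b > \<rho> / 2" by linarith
      then have spos: "s b > 0" using \<rho> by linarith
      have mx: "max (\<rho>/2) (s b) = s b" using sge by simp
      have gb: "g b j = \<phi> j b / s b" if "j < N" for j using that mx by (simp add: g_def)
      have gnn: "g b j \<ge> 0" for j using \<phi>b spos by (simp add: g_def mx)
      have gsum: "(\<Sum>j<N. g b j) = 1"
      proof -
        have "(\<Sum>j<N. g b j) = (\<Sum>j<N. \<phi> j b / s b)" by (rule sum.cong) (simp_all add: gb)
        also have "\<dots> = s b / s b" unfolding s_def by (rule sum_divide_distrib[symmetric])
        finally show ?thesis using spos by simp
      qed
      have "\<forall>i\<ge>N. g b i = 0" by (simp add: g_def)
      moreover have "\<forall>i<N. 0 \<le> g b i" using gnn by blast
      ultimately have gS: "g b \<in> prob_simplex N"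
        using gsum unfolding prob_simplex_def vecs_def by blast
      have pg: "\<bar>p j - g b j\<bar> \<le> 2 * \<tau>" if "j < N" for j
      proof -
        have "\<bar>p j - g b j\<bar> \<le> vnorm N (\<lambda>i. p i - g b i)" using that by (rule vnorm_comp)
        also have "\<dots> \<le> 2 * vnorm N (\<lambda>i. fh b i - g b i)" unfolding p_def by (rule proj_close[OF N1 gS])
        also have "vnorm N (\<lambda>i. fh b i - g b i) = vnorm N (\<lambda>i. g b i - fh b i)" by (rule vnorm_sym)
        also have "\<dots> \<le> r \<omega> Lset n N cc" by (rule fhL[OF bL])
        finally show ?thesis using cc by linarith
      qed
      have sumeq: "(\<Sum>j<N. \<Sum>i<Q. (p j * z j i) *\<^sub>R yb i) = (\<Sum>j<N. p j *\<^sub>R w j)"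
        by (simp add: w_def z_def Y.T_def scaleR_sum_right)
      have fx: "f x = (\<Sum>j<N. g b j *\<^sub>R f x)" by (simp add: scaleR_sum_left[symmetric] gsum)
      have dec: "f x - (\<Sum>j<N. p j *\<^sub>R w j) = (\<Sum>j<N. g b j *\<^sub>R (f x - w j)) + (\<Sum>j<N. (g b j - p j) *\<^sub>R w j)"
      proof -
        have "(\<Sum>j<N. g b j *\<^sub>R (f x - w j)) + (\<Sum>j<N. (g b j - p j) *\<^sub>R w j)
            = (\<Sum>j<N. g b j *\<^sub>R (f x - w j) + (g b j - p j) *\<^sub>R w j)" by (simp add: sum.distrib)
        also have "\<dots> = (\<Sum>j<N. g b j *\<^sub>R f x - p j *\<^sub>R w j)"
          by (rule sum.cong) (simp_all add: algebra_simps)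
        also have "\<dots> = (\<Sum>j<N. g b j *\<^sub>R f x) - (\<Sum>j<N. p j *\<^sub>R w j)" by (simp add: sum_subtractf)
        finally show ?thesis using fx by simp
      qed
      have b1: "norm (\<Sum>j<N. g b j *\<^sub>R (f x - w j)) \<le> \<epsilon> / 2"
      proof -
        have "norm (\<Sum>j<N. g b j *\<^sub>R (f x - w j)) \<le> (\<Sum>j<N. norm (g b j *\<^sub>R (f x - w j)))"
          by (rule norm_sum)
        also have "\<dots> \<le> (\<Sum>j<N. g b j * (\<epsilon> / 2))"
        proof (rule sum_mono)
          fix j assume jN: "j \<in> {..<N}"
          show "norm (g b j *\<^sub>R (f x - w j)) \<le> g b j * (\<epsilon> / 2)"
          proof (cases "g b j = 0")
            case True then show ?thesis by simp
          next
            case False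
            then have "g b j > 0" using gnn[of j] by linarith
            then have "\<phi> j b / s b > 0" using jN gb[of j] by simp
            then have "\<phi> j b > 0" using spos by (simp add: zero_less_divide_iff)
            then have vj: "vnorm n (\<lambda>k. b k - B (c j) k) < \<rho>" unfolding \<phi>_def by linarith
            have "norm (X.T n x - X.T n (c j)) \<le> Lp * vnorm n (\<lambda>k. b k - B (c j) k)"
              unfolding b_def by (rule TB)
            also have "\<dots> < Lp * \<rho>" using vj Lp by simp
            also have "Lp * \<rho> = df / 4" using Lp by (simp add: \<rho>_def)
            finally have t2: "norm (X.T n x - X.T n (c j)) < df / 4" .
            have t1: "norm (x - X.T n x) \<le> df / 4" by (rule hn[OF xK])
            have t3: "norm (X.T n (c j) - c j) \<le> df / 4"
              using hn[of "c j"] cK[of j] jN by (simp add: norm_minus_commute)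
            have eqx: "x - c j = (x - X.T n x) + (X.T n x - X.T n (c j)) + (X.T n (c j) - c j)" by simp
            have tri1: "norm ((x - X.T n x) + (X.T n x - X.T n (c j)) + (X.T n (c j) - c j))
               \<le> norm ((x - X.T n x) + (X.T n x - X.T n (c j))) + norm (X.T n (c j) - c j)"
              by (rule norm_triangle_ineq)
            have tri2: "norm ((x - X.T n x) + (X.T n x - X.T n (c j))) \<le> norm (x - X.T n x) + norm (X.T n x - X.T n (c j))"
              by (rule norm_triangle_ineq)
            have "norm (x - c j) \<le> norm (x - X.T n x) + norm (X.T n x - X.T n (c j)) + norm (X.T n (c j) - c j)"
              unfolding eqx using tri1 tri2 by linarith
            then have "norm (x - c j) < df" using t1 t2 t3 df by linarith
            have cj: "c j \<in> K" using cK jN by simp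
            have "dist (f x) (f (c j)) < \<epsilon> / 4" using dfK[OF cj xK] \<open>norm (x - c j) < df\<close> by (simp add: dist_norm)
            moreover have "norm (f (c j) - w j) \<le> \<epsilon> / 4" using hw jN by simp
            ultimately have "norm (f x - w j) \<le> \<epsilon> / 2"
              using norm_triangle_ineq[of "f x - f (c j)" "f (c j) - w j"] by (simp add: dist_norm)
            then have "g b j * norm (f x - w j) \<le> g b j * (\<epsilon> / 2)" using gnn[of j] by (rule mult_left_mono)
            then show ?thesis using gnn[of j] by simp
          qed
        qed
        also have "\<dots> = (\<Sum>j<N. g b j) * (\<epsilon> / 2)" by (rule sum_distrib_right[symmetric])
        also have "\<dots> = \<epsilon> / 2" by (simp add: gsum)
        finally show ?thesis .
      qed
      have b2: "norm (\<Sum>j<N. (g b j - p j) *\<^sub>R w j) \<le> \<epsilon> / 4"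
      proof -
        have "norm (\<Sum>j<N. (g b j - p j) *\<^sub>R w j) \<le> (\<Sum>j<N. norm ((g b j - p j) *\<^sub>R w j))"
          by (rule norm_sum)
        also have "\<dots> \<le> (\<Sum>j<N. 2 * \<tau> * norm (w j))"
        proof (rule sum_mono)
          fix j assume "j \<in> {..<N}"
          then have "\<bar>g b j - p j\<bar> \<le> 2 * \<tau>" using pg[of j] by (simp add: abs_minus_commute)
          then show "norm ((g b j - p j) *\<^sub>R w j) \<le> 2 * \<tau> * norm (w j)"
            by (simp add: mult_right_mono)
        qed
        also have "\<dots> = 2 * \<tau> * (\<Sum>j<N. norm (w j))" by (simp add: sum_distrib_left)
        also have "\<dots> \<le> 2 * \<tau> * W" using \<tau> unfolding W_def by (intro mult_left_mono) auto
        also have "\<dots> = \<epsilon> / 4" using W by (simp add: \<tau>_def)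
        finally show ?thesis .
      qed
      have "norm (f x - (\<Sum>j<N. p j *\<^sub>R w j)) \<le> 3 * \<epsilon> / 4"
        unfolding dec using norm_triangle_ineq[of "\<Sum>j<N. g b j *\<^sub>R (f x - w j)" "\<Sum>j<N. (g b j - p j) *\<^sub>R w j"] b1 b2
        by linarith
      then show ?thesis unfolding bdef p_def[symmetric] sumeq .
    qed
    show ?thesis
      apply (rule exI[of _ n], rule exI[of _ N], rule exI[of _ Q])
      apply (intro conjI n1 N1 Q1)
      apply (rule bexI[of _ fh])
       apply (rule exI[of _ z])
       apply (rule exI[of _ "3 * \<epsilon> / 4"])
      using key eps fh by auto
  qed
qed

end
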